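(* Let $G=(V,E)$ be an intersecting hypergraph and $c\colon V\to\{0,1\}$ a colouring such that every $c$-monochromatic hitting set for $G$ has size at least $h$, where $h>r(G)$. Then there exist a partial function $f\colon\{0,1\}^V\to\{0,1,*\}$ and an input $x\in f^{-1}( * )$ such that $\mathrm{C}(f)\le r(G)$ and $\min\{\mathrm{C}_{\bar 0}(f,x),\mathrm{C}_{\bar 1}(f,x)\}\ge h$. Moreover $f$ can be taken monotone, in the sense that flipping any input bit from $0$ to $1$ never changes the value from $1$ to $0$ or $*$, nor from $*$ to $0$.
   Context: A hypergraph $G=(V,E)$ is intersecting if $e\cap e'\neq\emptyset$ for all $e,e'\in E$. A set $U\subseteq V$ is a hitting set if it intersects every edge; it is $c$-monochromatic if $c$ is constant on $U$. The rank $r(G)$ is the maximum edge size. For a partial function $f\colon\{0,1\}^V\to\{0,1,*\}$: a partial input $\rho\in\{0,1,*\}^V$ is consistent with $x$ if $\rho_v=x_v$ whenever $\rho_v\neq*$; $|\rho|$ is the number of non-$*$ entries; for $\Sigma\subseteq\{0,1,*\}$, $\rho$ is a $\Sigma$-certificate for $x$ if it is consistent with $x$ and $f(x')\in\Sigma$ for all $x'$ consistent with $\rho$; $\mathrm{C}_\Sigma(f,x)$ is the least size of such a certificate, $\mathrm{C}_\Sigma(f)=\max_{x\in f^{-1}(\Sigma)}\mathrm{C}_\Sigma(f,x)$; $0,1,\bar0,\bar1$ denote $\Sigma=\{0\},\{1\},\{1,*\},\{0,*\}$; $\mathrm{C}(f)=\max\{\mathrm{C}_0(f),\mathrm{C}_1(f)\}$.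 *)

theory Defs
  imports Main
begin

text \<open>Hypergraphs on a finite vertex type: the vertex set V is UNIV of a finite type 'v,
  edges are sets of vertices.\<close>

definition intersecting :: "'v set set \<Rightarrow> bool" where
  "intersecting E \<longleftrightarrow> (\<forall>e\<in>E. \<forall>e'\<in>E. e \<inter> e' \<noteq> {})"

definition hitting_set :: "'v set set \<Rightarrow> 'v set \<Rightarrow> bool" where
  "hitting_set E U \<longleftrightarrow> (\<forall>e\<in>E. U \<inter> e \<noteq> {})"

definition monochromatic :: "('v \<Rightarrow> bool) \<Rightarrow> 'v set \<Rightarrow> bool" where
  "monochromatic c U \<longleftrightarrow> (\<exists>b. \<forall>u\<in>U. c u = b)"

definition rank :: "'v set set \<Rightarrow> nat" where
  "rank E = Max (insert 0 (card ` E))"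

datatype val = Zero | One | Star

text \<open>Partial inputs: None stands for *.\<close>
type_synonym 'v pinput = "'v \<Rightarrow> bool option"

definition consistent :: "'v pinput \<Rightarrow> ('v \<Rightarrow> bool) \<Rightarrow> bool" where
  "consistent \<rho> x \<longleftrightarrow> (\<forall>v. \<rho> v \<noteq> None \<longrightarrow> \<rho> v = Some (x v))"

definition psize :: "'v pinput \<Rightarrow> nat" where
  "psize \<rho> = card {v. \<rho> v \<noteq> None}"

definition is_cert :: "(('v \<Rightarrow> bool) \<Rightarrow> val) \<Rightarrow> val set \<Rightarrow> 'v pinput \<Rightarrow> ('v \<Rightarrow> bool) \<Rightarrow> bool" where
  "is_cert f \<Sigma> \<rho> x \<longleftrightarrow> consistent \<rho> x \<and> (\<forall>x'. consistent \<rho> x' \<longrightarrow> f x' \<in> \<Sigma>)"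

definition cert_at :: "(('v \<Rightarrow> bool) \<Rightarrow> val) \<Rightarrow> val set \<Rightarrow> ('v \<Rightarrow> bool) \<Rightarrow> nat" where
  "cert_at f \<Sigma> x = (LEAST k. \<exists>\<rho>. is_cert f \<Sigma> \<rho> x \<and> psize \<rho> = k)"

definition cert :: "(('v \<Rightarrow> bool) \<Rightarrow> val) \<Rightarrow> val set \<Rightarrow> nat" where
  "cert f \<Sigma> = Max (insert 0 {cert_at f \<Sigma> x | x. f x \<in> \<Sigma>})"

definition cert_complexity :: "(('v \<Rightarrow> bool) \<Rightarrow> val) \<Rightarrow> nat" where
  "cert_complexity f = max (cert f {Zero}) (cert f {One})"

definition monotone_partial :: "(('v \<Rightarrow> bool) \<Rightarrow> val) \<Rightarrow> bool" where
  "monotone_partial f \<longleftrightarrow> (\<forall>x v. \<not> x v \<longrightarrow>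
      (f x = One \<longrightarrow> f (x(v := True)) = One) \<and>
      (f x = Star \<longrightarrow> f (x(v := True)) \<noteq> Zero))"

end

theory Submission
  imports Defs
begin

lemma card_le_rank:
  fixes E :: "('v::finite) set set"
  assumes "e \<in> E" shows "card e \<le> rank E"
  unfolding rank_def using assms by (intro Max_ge) auto

lemma cert_at_le:
  assumes "is_cert f S \<rho> x" shows "cert_at f S x \<le> psize \<rho>"
  unfolding cert_at_def by (rule Least_le, rule exI[of _ \<rho>], simp add: assms)

lemma cert_at_ge:
  assumes "is_cert f S \<rho>0 x" and "\<And>\<rho>. is_cert f S \<rho> x \<Longrightarrow> psize \<rho> \<ge> h"
  shows "cert_at f S x \<ge> h"
proof -
  have "\<exists>\<rho>. is_cert f S \<rho> x \<and> psize \<rho> = cert_at f S x"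
    unfolding cert_at_def
    by (rule LeastI_ex[where P="\<lambda>k. \<exists>\<rho>. is_cert f S \<rho> x \<and> psize \<rho> = k"], rule exI[of _ "psize \<rho>0"], rule exI[of _ \<rho>0], simp add: assms(1))
  then obtain \<rho> where r: "is_cert f S \<rho> x" "psize \<rho> = cert_at f S x" by blast
  from assms(2)[OF r(1)] r(2) show ?thesis by linarith
qed

lemma cert_le:
  fixes f :: "('v::finite \<Rightarrow> bool) \<Rightarrow> val"
  assumes "\<And>x. f x \<in> S \<Longrightarrow> cert_at f S x \<le> r"
  shows "cert f S \<le> r"
proof -
  have fin: "finite {cert_at f S x | x. f x \<in> S}"
  proof -
    have "{cert_at f S x | x. f x \<in> S} \<subseteq> (cert_at f S) ` UNIV" by auto
    then show ?thesis by (rule finite_subset) simp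
  qed
  show ?thesis unfolding cert_def using fin assms by (subst Max_le_iff) auto
qed

theorem theorem2p2:
  fixes E :: "('v::finite) set set" and c :: "'v \<Rightarrow> bool" and h :: nat
  assumes "intersecting E"
    and "\<forall>U. hitting_set E U \<and> monochromatic c U \<longrightarrow> card U \<ge> h"
    and "h > rank E"
  shows "\<exists>(f :: ('v \<Rightarrow> bool) \<Rightarrow> val) x. f x = Star \<and> monotone_partial f \<and> cert_complexity f \<le> rank E
           \<and> cert_at f {One, Star} x \<ge> h \<and> cert_at f {Zero, Star} x \<ge> h"
proof -
  note int = assms(1)[unfolded intersecting_def]
  define f :: "('v \<Rightarrow> bool) \<Rightarrow> val" where
    "f x = (if \<exists>e\<in>E. \<forall>v\<in>e. x v then One else if \<exists>e\<in>E. \<forall>v\<in>e. \<not> x v then Zero else Star)" for x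
  have mono: "monotone_partial f"
    unfolding monotone_partial_def
  proof (intro allI impI conjI)
    fix x :: "'v \<Rightarrow> bool" and v assume "\<not> x v"
    show "f x = One \<Longrightarrow> f (x(v := True)) = One"
      unfolding f_def by (auto split: if_splits)
    assume "f x = Star"
    then have A: "\<not>(\<exists>e\<in>E. \<forall>u\<in>e. \<not> x u)" unfolding f_def by (auto split: if_splits)
    show "f (x(v := True)) \<noteq> Zero"
    proof
      assume "f (x(v := True)) = Zero"
      then obtain e where e: "e\<in>E" "\<forall>u\<in>e. \<not> (x(v:=True)) u" unfolding f_def by (auto simp del: fun_upd_apply split: if_splits)
      then have "\<forall>u\<in>e. \<not> x u" by (metis fun_upd_apply)
      then show False using A e(1) by blast
    qed
  qed
  have noboth: False if "e \<in> E" "e' \<in> E" "\<forall>v\<in>e. x v" "\<forall>v\<in>e'. \<not> x v" for e e' and x :: "'v \<Rightarrow> bool"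
    using int that by blast
  have selfcert: "is_cert f S (\<lambda>v. Some (x v)) x" if "f x \<in> S" for S and x :: "'v \<Rightarrow> bool"
    using that unfolding is_cert_def consistent_def by (simp add: fun_eq_iff[symmetric])
  have c1: "cert f {One} \<le> rank E"
  proof (rule cert_le)
    fix x assume "f x \<in> {One}"
    then obtain e where e: "e \<in> E" "\<forall>v\<in>e. x v" unfolding f_def by (auto split: if_splits)
    define \<rho> where "\<rho> v = (if v \<in> e then Some True else None)" for v
    have "is_cert f {One} \<rho> x" unfolding is_cert_def consistent_def
    proof (intro conjI allI impI)
      fix x' assume "\<forall>v. \<rho> v \<noteq> None \<longrightarrow> \<rho> v = Some (x' v)"
      then have "\<forall>v\<in>e. x' v" unfolding \<rho>_def by (metis option.inject option.distinct(1))
      then show "f x' \<in> {One}" unfolding f_def using e(1) by auto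
    next
      fix v assume "\<rho> v \<noteq> None"
      then have "v \<in> e" unfolding \<rho>_def by (cases "v \<in> e") simp_all
      then show "\<rho> v = Some (x v)" using e unfolding \<rho>_def by simp
    qed
    moreover have "psize \<rho> = card e" unfolding psize_def \<rho>_def by (rule arg_cong[where f=card]) auto
    ultimately show "cert_at f {One} x \<le> rank E" using cert_at_le card_le_rank[OF e(1)] by (metis order_trans)
  qed
  have c0: "cert f {Zero} \<le> rank E"
  proof (rule cert_le)
    fix x assume "f x \<in> {Zero}"
    then obtain e where e: "e \<in> E" "\<forall>v\<in>e. \<not> x v" unfolding f_def by (auto split: if_splits)
    define \<rho> where "\<rho> v = (if v \<in> e then Some False else None)" for v
    have "is_cert f {Zero} \<rho> x" unfolding is_cert_def consistent_def
    proof (intro conjI allI impI)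
      fix x' assume "\<forall>v. \<rho> v \<noteq> None \<longrightarrow> \<rho> v = Some (x' v)"
      then have "\<forall>v\<in>e. \<not> x' v" unfolding \<rho>_def by (metis option.inject option.distinct(1))
      then have z: "\<exists>e\<in>E. \<forall>v\<in>e. \<not> x' v" using e(1) by blast
      have nz: "\<not>(\<exists>e'\<in>E. \<forall>v\<in>e'. x' v)" using noboth e(1) \<open>\<forall>v\<in>e. \<not> x' v\<close> by blast
      show "f x' \<in> {Zero}" unfolding f_def using z nz by simp
    next
      fix v assume "\<rho> v \<noteq> None"
      then have "v \<in> e" unfolding \<rho>_def by (cases "v \<in> e") simp_all
      then show "\<rho> v = Some (x v)" using e unfolding \<rho>_def by simp
    qed
    moreover have "psize \<rho> = card e" unfolding psize_def \<rho>_def by (rule arg_cong[where f=card]) auto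
    ultimately show "cert_at f {Zero} x \<le> rank E" using cert_at_le card_le_rank[OF e(1)] by (metis order_trans)
  qed
  have small: False if "e \<in> E" "\<forall>v\<in>e. c v = b" for e b
  proof -
    have "hitting_set E e" unfolding hitting_set_def using int that(1) by (auto simp: Int_commute)
    moreover have "monochromatic c e" unfolding monochromatic_def using that by blast
    ultimately have "card e \<ge> h" using assms(2) by blast
    then show False using card_le_rank[OF that(1)] assms(3) by simp
  qed
  have n1: "\<not>(\<exists>e\<in>E. \<forall>v\<in>e. c v)" using small[of _ True] by blast
  have n0: "\<not>(\<exists>e\<in>E. \<forall>v\<in>e. \<not> c v)" using small[of _ False] by blast
  have fc: "f c = Star" unfolding f_def using n1 n0 by simp
  have psz: "card {v. \<rho> v = Some b} \<le> psize \<rho>" for \<rho> :: "'v pinput" and b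
    unfolding psize_def by (rule card_mono) auto
  have l1: "cert_at f {One, Star} c \<ge> h"
  proof (rule cert_at_ge[OF selfcert])
    show "f c \<in> {One, Star}" using fc by simp
    fix \<rho> assume rc: "is_cert f {One, Star} \<rho> c"
    let ?S = "{v. \<rho> v = Some True}"
    have hit: "hitting_set E ?S" unfolding hitting_set_def
    proof
      fix e assume e: "e \<in> E"
      show "?S \<inter> e \<noteq> {}"
      proof
        assume dis: "?S \<inter> e = {}"
        define x' where "x' v = (\<rho> v = Some True)" for v
        have "consistent \<rho> x'" unfolding consistent_def x'_def by auto
        then have "f x' \<in> {One, Star}" using rc unfolding is_cert_def by blast
        moreover have "\<exists>e\<in>E. \<forall>v\<in>e. \<not> x' v" using dis e unfolding x'_def by auto
        moreover have "\<not> (\<exists>e'\<in>E. \<forall>v\<in>e'. x' v)"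
        proof
          assume "\<exists>e'\<in>E. \<forall>v\<in>e'. x' v"
          then obtain e' where "e' \<in> E" "e' \<subseteq> ?S" unfolding x'_def by auto
          then show False using int e dis by blast
        qed
        ultimately show False unfolding f_def by simp
      qed
    qed
    have "\<forall>u\<in>?S. c u = True"
    proof
      fix u assume "u \<in> ?S"
      hence "\<rho> u = Some True" by simp
      moreover have "\<rho> u \<noteq> None \<longrightarrow> \<rho> u = Some (c u)" using rc unfolding is_cert_def consistent_def by blast
      ultimately show "c u = True" by simp
    qed
    then have "monochromatic c ?S" unfolding monochromatic_def by blast
    then have "card ?S \<ge> h" using hit assms(2) by blast
    then show "psize \<rho> \<ge> h" using psz[of \<rho> True] by simp
  qed
  have l0: "cert_at f {Zero, Star} c \<ge> h"
  proof (rule cert_at_ge[OF selfcert])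
    show "f c \<in> {Zero, Star}" using fc by simp
    fix \<rho> assume rc: "is_cert f {Zero, Star} \<rho> c"
    let ?S = "{v. \<rho> v = Some False}"
    have hit: "hitting_set E ?S" unfolding hitting_set_def
    proof
      fix e assume e: "e \<in> E"
      show "?S \<inter> e \<noteq> {}"
      proof
        assume dis: "?S \<inter> e = {}"
        define x' where "x' v = (\<rho> v \<noteq> Some False)" for v
        have "consistent \<rho> x'" unfolding consistent_def x'_def by auto
        then have "f x' \<in> {Zero, Star}" using rc unfolding is_cert_def by blast
        moreover have "\<exists>e\<in>E. \<forall>v\<in>e. x' v" using dis e unfolding x'_def by auto
        ultimately show False unfolding f_def by simp
      qed
    qed
    have "\<forall>u\<in>?S. c u = False"
    proof
      fix u assume "u \<in> ?S"
      hence "\<rho> u = Some False" by simp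
      moreover have "\<rho> u \<noteq> None \<longrightarrow> \<rho> u = Some (c u)" using rc unfolding is_cert_def consistent_def by blast
      ultimately show "c u = False" by simp
    qed
    then have "monochromatic c ?S" unfolding monochromatic_def by blast
    then have "card ?S \<ge> h" using hit assms(2) by blast
    then show "psize \<rho> \<ge> h" using psz[of \<rho> False] by simp
  qed
  show ?thesis
    using fc mono c0 c1 l0 l1 unfolding cert_complexity_def by (intro exI[of _ f] exI[of _ c]) auto
qed

end
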